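(* Let $q$ be a prime power, $n=q^4-1$, and let $x=(a_0,a_1,a_2,a_3)\in\{1,\ldots,n-1\}$ with $I_x=\{x\}$. Then $I_x$ is a symmetric coset if and only if $a_2+a_3=q-1$, and $I_x$ is an SR-asymmetric coset if and only if $a_2+a_3>q-1$.
   Context: Identify $\mathbb{Z}_n$ with $\{0,\ldots,n-1\}$, all arithmetic modulo $n$. The $q$-adic 4-tuple $(a_0,a_1,a_2,a_3)$ denotes $a_0+a_1q+a_2q^2+a_3q^3$ with $0\le a_i<q$. The cyclotomic coset of $x$ with respect to $q^2$ is $I_x=\{x,\,q^2x\bmod n\}$; its minimal representative is its least element. The (Hermitian) reciprocal coset of $I_x$ is $I_{n-qx}$ (with $n-qx$ reduced modulo $n$). $I_x$ is symmetric if $I_{n-qx}=I_x$ and asymmetric otherwise. If $I_x$ is asymmetric with reciprocal coset $I_y$, with $x,y$ the minimal representatives and $x<y$, then $I_x$ is the FR-asymmetric coset and $I_y$ the SR-asymmetric coset of the pair. *)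

theory Defs
  imports "HOL-Computational_Algebra.Primes"
begin

definition prime_power :: "nat \<Rightarrow> bool" where
  "prime_power q \<longleftrightarrow> (\<exists>p k. prime p \<and> k \<ge> 1 \<and> q = p ^ k)"

definition digit :: "nat \<Rightarrow> nat \<Rightarrow> nat \<Rightarrow> nat" where
  "digit q i x = (x div q ^ i) mod q"

definition cyc_coset :: "nat \<Rightarrow> nat \<Rightarrow> nat \<Rightarrow> nat set" where
  "cyc_coset q n x = {x mod n, (q^2 * x) mod n}"

text \<open>Representative n - qx (mod n) of the Hermitian reciprocal coset\<close>
definition recip_rep :: "nat \<Rightarrow> nat \<Rightarrow> nat \<Rightarrow> nat" where
  "recip_rep q n x = (n - (q * x) mod n) mod n"

definition symmetric_coset :: "nat \<Rightarrow> nat \<Rightarrow> nat \<Rightarrow> bool" where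
  "symmetric_coset q n x \<longleftrightarrow> cyc_coset q n (recip_rep q n x) = cyc_coset q n x"

definition SR_asymmetric_coset :: "nat \<Rightarrow> nat \<Rightarrow> nat \<Rightarrow> bool" where
  "SR_asymmetric_coset q n x \<longleftrightarrow> \<not> symmetric_coset q n x \<and>
     Min (cyc_coset q n (recip_rep q n x)) < Min (cyc_coset q n x)"

end

theory Submission
  imports Defs
begin

lemma fix_coset:
  fixes q j t :: nat
  assumes "q^2 = t + 1" "j < t"
  shows "cyc_coset q (t*(t+2)) (j*(t+2)) = {j*(t+2)}"
proof -
  have lt: "j * (t+2) < t * (t+2)" using assms(2) by (intro mult_strict_right_mono) auto
  have "q^2 * (j * (t+2)) = j * (t+2) + j * (t * (t+2))" unfolding assms(1) by (simp add: algebra_simps)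
  then have "(q^2 * (j * (t+2))) mod (t * (t+2)) = (j * (t+2)) mod (t * (t+2))" by simp
  also have "... = j * (t+2)" using lt by (rule mod_less)
  finally have "(q^2 * (j * (t+2))) mod (t * (t+2)) = j * (t+2)" .
  then show ?thesis using lt unfolding cyc_coset_def by simp
qed

theorem mainTheorem8:
  fixes q n x :: nat
  assumes "prime_power q"
    and "n = q ^ 4 - 1"
    and "1 \<le> x" and "x \<le> n - 1"
    and "cyc_coset q n x = {x}"
  shows "(symmetric_coset q n x \<longleftrightarrow> digit q 2 x + digit q 3 x = q - 1)
       \<and> (SR_asymmetric_coset q n x \<longleftrightarrow> digit q 2 x + digit q 3 x > q - 1)"
proof -
  obtain p e where pe: "prime p" "e \<ge> 1" "q = p ^ e" using assms(1) unfolding prime_power_def by blast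
  have "p \<ge> 2" using pe(1) prime_ge_2_nat by blast
  then have "p ^ 1 \<le> p ^ e" using pe(2) by (intro power_increasing) auto
  then have "p ^ e \<ge> p" by simp
  then have q2: "q \<ge> 2" using pe(3) \<open>p \<ge> 2\<close> by linarith
  define t where "t = q^2 - 1"
  define m where "m = q^2 + 1"
  have qq: "q*q \<ge> 2*2" using mult_le_mono[OF q2 q2] .
  have qsq: "q^2 = t + 1" unfolding t_def using qq by (simp add: power2_eq_square)
  have tpos: "t \<ge> 3" using qq qsq by (simp add: power2_eq_square)
  have m2: "m = t + 2" unfolding m_def qsq by simp
  have nt: "n = t * m"
  proof -
    have "q^4 = q^2 * q^2" by (simp flip: power_add)
    then have "q^4 = (t+1)*(t+1)" unfolding qsq .
    then have "n = (t+1)*(t+1) - 1" using assms(2) by simp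
    also have "... = t * (t+2)" by (simp add: algebra_simps)
    finally show ?thesis unfolding m2 .
  qed
  have xn: "x < n" using assms(3,4) by linarith
  have "(q^2 * x) mod n \<in> {x}" using assms(5) unfolding cyc_coset_def by blast
  then have md: "(q^2 * x) mod n = x" by simp
  define k where "k = (q^2*x) div n"
  have "q^2 * x = k * n + (q^2*x) mod n" unfolding k_def by (rule div_mult_mod_eq[symmetric])
  then have "q^2 * x = x + n * k" unfolding md by (metis add.commute mult.commute)
  then have "(t+1) * x = x + n * k" unfolding qsq .
  then have "t * x = n * k" by simp
  then have "t * x = t * (k * m)" using nt by (simp add: ac_simps)
  then have xk: "x = k * m" using tpos by simp
  have kt: "k < t" using xn unfolding nt xk by simp
  have k0: "k \<ge> 1" using assms(3) xk by (cases k) auto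
  define a0 where "a0 = k mod q"
  define a1 where "a1 = k div q"
  have ka: "k = a0 + q * a1" unfolding a0_def a1_def by simp
  have a0q: "a0 < q" using q2 unfolding a0_def by simp
  have kq2: "k < q^2" using kt qsq by simp
  have a1q: "a1 < q" using kq2 unfolding a1_def
    by (simp add: less_mult_imp_div_less power2_eq_square)
  have xexp: "x = k + q^2 * k" using xk unfolding m_def by (simp add: algebra_simps)
  have q2nz: "q^2 \<noteq> 0" using q2 by simp
  have "x = k + k * q^2" using xexp by simp
  then have d2: "x div q^2 = k" using kq2 div_mult_self1[OF q2nz, of k k] by simp
  have dig2: "digit q 2 x = a0" unfolding digit_def d2 a0_def ..
  have "x div q^3 = (x div q^2) div q" by (simp add: div_mult2_eq power_Suc2 numeral_3_eq_3 power2_eq_square)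
  then have "x div q^3 = a1" using d2 a1_def by simp
  then have dig3: "digit q 3 x = a1" unfolding digit_def using a1q by simp
  define k' where "k' = a1 + q * a0"
  have k'le: "k' \<le> t"
  proof -
    have "a1 \<le> q - 1" "a0 \<le> q - 1" using a0q a1q by auto
    then have "k' \<le> (q-1) + q*(q-1)" unfolding k'_def by (simp add: add_mono)
    also have "... = t" unfolding t_def using q2 by (simp add: algebra_simps power2_eq_square diff_mult_distrib2)
    finally show ?thesis .
  qed
  have k'ne: "k' \<noteq> t"
  proof
    assume "k' = t"
    then have "a1 + q * a0 = (q - 1) + q * (q - 1)" unfolding k'_def t_def using q2
      by (simp add: algebra_simps power2_eq_square diff_mult_distrib2)
    then have E: "a1 + q * a0 = (q - 1) + q * (q - 1)" .
    have dm: "\<And>a b. a < q \<Longrightarrow> (a + q*b) mod q = a \<and> (a + q*b) div q = b" by auto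
    have F1: "(a1 + q * a0) mod q = a1" "(a1 + q * a0) div q = a0" using dm[OF a1q] by auto
    have "q - 1 < q" using q2 by simp
    then have F2: "((q - 1) + q * (q - 1)) mod q = q - 1" "((q - 1) + q * (q - 1)) div q = q - 1" using dm by blast+
    from F1 F2 have "a1 = q - 1" "a0 = q - 1" using E by metis+
    then have "k = t" using ka k'_def \<open>k' = t\<close> by simp
    then show False using kt by simp
  qed
  have k'lt: "k' < t" using k'le k'ne by simp
  have k'pos: "k' \<ge> 1"
  proof (rule ccontr)
    assume "\<not> k' \<ge> 1"
    then have "k' = 0" by simp
    then have z: "a1 + q * a0 = 0" unfolding k'_def .
    then have "q * a0 = 0" by simp
    then have "a0 = 0" using q2 by simp
    then have "a0 = 0" "a1 = 0" using z by auto
    then show False using ka k0 by simp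
  qed
  have qk: "q * k = k' + a1 * t" unfolding ka k'_def using qsq by (simp add: algebra_simps power2_eq_square)
  have "q * x = (q * k) * m" unfolding xk by (simp add: ac_simps)
  also have "... = (k' + a1 * t) * m" unfolding qk ..
  also have "... = k' * m + a1 * n" unfolding nt by (simp add: algebra_simps)
  finally have qx: "q * x = k' * m + a1 * n" .
  have mpos: "m > 0" using m2 by simp
  have lt1: "k' * m < t * m" using k'lt mpos by (intro mult_strict_right_mono) auto
  have "(q*x) mod n = (k' * m) mod n" unfolding qx by simp
  also have "... = k' * m" using lt1 unfolding nt by (rule mod_less)
  finally have qm: "(q*x) mod n = k' * m" .
  have tk: "t - k' < t" using k'pos k'lt by simp
  have lt2: "(t - k') * m < t * m" using tk mpos by (intro mult_strict_right_mono) auto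
  have "n - (q*x) mod n = t * m - k' * m" unfolding qm using nt by simp
  also have "... = (t - k') * m" by (simp add: diff_mult_distrib)
  finally have "n - (q*x) mod n = (t - k') * m" .
  then have rr: "recip_rep q n x = (t - k') * m" unfolding recip_rep_def using lt2 nt by simp
  have ct: "cyc_coset q n ((t - k') * m) = {(t - k') * m}"
    using fix_coset[OF qsq tk] unfolding nt m2 .
  have sum: "k + k' = (a0 + a1) * (q + 1)" unfolding ka k'_def by (simp add: algebra_simps)
  have tq: "t = (q - 1) * (q + 1)" unfolding t_def using q2 by (simp add: power2_eq_square algebra_simps diff_mult_distrib)
  have eqv: "(t - k') * m = x \<longleftrightarrow> k + k' = t" unfolding xk using mpos k'lt by auto
  have ltv: "(t - k') * m < x \<longleftrightarrow> t < k + k'" unfolding xk using mpos k'lt by auto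
  have sym: "symmetric_coset q n x \<longleftrightarrow> k + k' = t"
    unfolding symmetric_coset_def rr ct assms(5) using eqv by auto
  have sr: "SR_asymmetric_coset q n x \<longleftrightarrow> t < k + k'"
    unfolding SR_asymmetric_coset_def sym rr ct assms(5) using ltv by auto
  have e1: "k + k' = t \<longleftrightarrow> a0 + a1 = q - 1" unfolding sum tq mult_cancel2 by simp
  have e2: "t < k + k' \<longleftrightarrow> q - 1 < a0 + a1" unfolding sum tq mult_less_cancel2 by simp
  show ?thesis using sym sr e1 e2 dig2 dig3 by simp
qed

end
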